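(* For an arbitrary fixed order, if $OPT(I)=1$ then $FF(I)=1$, and if $OPT(I)=2$ then $FF(I)\le 3$. Hence first-fit is a $3/2$-approximation on instances with $OPT(I)\le 2$.
   Context: Fixed order scheduling with deadlines: there are jobs $J=\{1,\dots,n\}$, each job $j$ having a processing time $p_j\in\mathbb{N}$, $p_j>0$, and a deadline $d_j\in\mathbb{N}$ with $d_j\ge p_j$ (no other assumption relating order, deadlines, or processing times). All jobs are released at time $0$; job $j$ precedes job $k$ in the fixed order iff $j<k$. A schedule $\tau:J\to\{1,\dots,n\}$ assigns jobs to identical machines; each machine processes its jobs in the fixed order from time $0$ without idle time or preemption, so job $j$ completes at $\sum_{k\le j,\tau(k)=\tau(j)}p_k$; it is feasible if every job completes by its deadline. $OPT(I)$ is the minimum number of machines used by a feasible schedule. First-fit (FF): machines indexed $1,2,\dots$; process jobs in the fixed order and assign each job $j$ to the smallest-index machine whose current load (sum of processing times already assigned) plus $p_j$ is at most $d_j$; $FF(I)$ is the number of nonempty machines. *)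

theory Defs
  imports Main
begin

text \<open>Jobs are 1..n, processed in fixed order 1 < 2 < ... < n; machines are 1..n.
  A schedule is a function tau :: nat => nat (only its values on 1..n matter).\<close>

definition completion :: "(nat \<Rightarrow> nat) \<Rightarrow> (nat \<Rightarrow> nat) \<Rightarrow> nat \<Rightarrow> nat" where
  "completion p tau j = (\<Sum>k\<in>{k\<in>{1..j}. tau k = tau j}. p k)"

definition feasible :: "nat \<Rightarrow> (nat \<Rightarrow> nat) \<Rightarrow> (nat \<Rightarrow> nat) \<Rightarrow> (nat \<Rightarrow> nat) \<Rightarrow> bool" where
  "feasible n p d tau \<longleftrightarrow>
     (\<forall>j\<in>{1..n}. tau j \<in> {1..n}) \<and> (\<forall>j\<in>{1..n}. completion p tau j \<le> d j)"

definition OPT :: "nat \<Rightarrow> (nat \<Rightarrow> nat) \<Rightarrow> (nat \<Rightarrow> nat) \<Rightarrow> nat" where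
  "OPT n p d = (LEAST m. \<exists>tau. feasible n p d tau \<and> card (tau ` {1..n}) = m)"

primrec ff_sched :: "nat \<Rightarrow> (nat \<Rightarrow> nat) \<Rightarrow> (nat \<Rightarrow> nat) \<Rightarrow> (nat \<Rightarrow> nat)" where
  "ff_sched 0 p d = (\<lambda>_. 0)"
| "ff_sched (Suc k) p d =
     (let sigma = ff_sched k p d;
          load = (\<lambda>m. \<Sum>i\<in>{i\<in>{1..k}. sigma i = m}. p i)
      in sigma(Suc k := (LEAST m. 1 \<le> m \<and> load m + p (Suc k) \<le> d (Suc k))))"

definition FF :: "nat \<Rightarrow> (nat \<Rightarrow> nat) \<Rightarrow> (nat \<Rightarrow> nat) \<Rightarrow> nat" where
  "FF n p d = card (ff_sched n p d ` {1..n})"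

end

theory Submission
  imports Defs
begin

definition asg :: "(nat \<Rightarrow> nat) \<Rightarrow> (nat \<Rightarrow> nat) \<Rightarrow> nat \<Rightarrow> nat" where
  "asg p d i = ff_sched i p d i"

definition ld :: "(nat \<Rightarrow> nat) \<Rightarrow> (nat \<Rightarrow> nat) \<Rightarrow> nat \<Rightarrow> nat \<Rightarrow> nat" where
  "ld p d k m = (\<Sum>i\<in>{i\<in>{1..k}. asg p d i = m}. p i)"

lemma ff_stable: "1 \<le> i \<Longrightarrow> i \<le> k \<Longrightarrow> ff_sched k p d i = asg p d i"
proof (induction k)
  case 0 then show ?case by simp
next
  case (Suc k)
  show ?case
  proof (cases "i = Suc k")
    case True then show ?thesis by (simp add: asg_def)
  next
    case False
    then have "i \<le> k" using Suc.prems by simp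
    then show ?thesis using Suc False by (simp add: Let_def)
  qed
qed

lemma ld_eq: "ld p d k m = (\<Sum>i\<in>{1..k}. if asg p d i = m then p i else 0)"
  unfolding ld_def by (rule sum.inter_filter) simp

lemma asg_Suc: "asg p d (Suc k) = (LEAST m. 1 \<le> m \<and> ld p d k m + p (Suc k) \<le> d (Suc k))"
proof -
  have "(\<Sum>i\<in>{i\<in>{1..k}. ff_sched k p d i = m}. p i) = ld p d k m" for m
  proof -
    have "{i\<in>{1..k}. ff_sched k p d i = m} = {i\<in>{1..k}. asg p d i = m}"
      using ff_stable[of _ k p d] by auto
    then show ?thesis by (simp add: ld_def)
  qed
  then show ?thesis by (simp add: asg_def Let_def)
qed

lemma asg_spec:
  assumes "p (Suc k) \<le> d (Suc k)"
  shows "1 \<le> asg p d (Suc k)"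
    "ld p d k (asg p d (Suc k)) + p (Suc k) \<le> d (Suc k)"
    "\<And>m. 1 \<le> m \<Longrightarrow> m < asg p d (Suc k) \<Longrightarrow> d (Suc k) < ld p d k m + p (Suc k)"
proof -
  define M where "M = Suc (Max (insert 0 (asg p d ` {1..k})))"
  have "ld p d k M = 0"
  proof -
    have "asg p d i \<noteq> M" if "i \<in> {1..k}" for i
    proof -
      have "asg p d i \<le> Max (insert 0 (asg p d ` {1..k}))"
        using that by (intro Max_ge) auto
      then show ?thesis unfolding M_def by simp
    qed
    then show ?thesis by (simp add: ld_eq)
  qed
  then have ex: "1 \<le> M \<and> ld p d k M + p (Suc k) \<le> d (Suc k)"
    using assms unfolding M_def by simp
  show "1 \<le> asg p d (Suc k)"
    unfolding asg_Suc using LeastI[of "\<lambda>m. 1 \<le> m \<and> ld p d k m + p (Suc k) \<le> d (Suc k)", OF ex]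
    by simp
  show "ld p d k (asg p d (Suc k)) + p (Suc k) \<le> d (Suc k)"
    unfolding asg_Suc using LeastI[of "\<lambda>m. 1 \<le> m \<and> ld p d k m + p (Suc k) \<le> d (Suc k)", OF ex]
    by simp
  fix m assume "1 \<le> m" "m < asg p d (Suc k)"
  then show "d (Suc k) < ld p d k m + p (Suc k)"
    unfolding asg_Suc using not_less_Least[of m "\<lambda>m. 1 \<le> m \<and> ld p d k m + p (Suc k) \<le> d (Suc k)"]
    by auto
qed

lemma asg_ge1: "1 \<le> i \<Longrightarrow> p i \<le> d i \<Longrightarrow> 1 \<le> asg p d i"
  using asg_spec(1)[of p "i - 1" d] by simp

lemma FF_eq: "FF n p d = card (asg p d ` {1..n})"
proof -
  have "ff_sched n p d ` {1..n} = asg p d ` {1..n}"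
    using ff_stable[of _ n p d] by (intro image_cong) auto
  then show ?thesis by (simp add: FF_def)
qed

lemma opt_exists:
  assumes hp: "\<forall>j\<in>{1..n}. p j \<le> d j"
  shows "\<exists>tau. feasible n p d tau \<and> card (tau ` {1..n}) = OPT n p d"
proof -
  have "feasible n p d id"
  proof -
    have "completion p id j = p j" if "j \<in> {1..n}" for j
    proof -
      have "{k \<in> {1..j}. id k = id j} = {j}" using that by auto
      then show ?thesis by (simp add: completion_def)
    qed
    then show ?thesis using hp by (simp add: feasible_def)
  qed
  then have "\<exists>tau. feasible n p d tau \<and> card (tau ` {1..n}) = card (id ` {1..n})" by blast
  then show ?thesis unfolding OPT_def by (rule LeastI)
qed

lemma split_ivl:
  fixes f :: "nat \<Rightarrow> nat"
  assumes "z \<le> k"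
  shows "(\<Sum>i\<in>{1..k}. f i) = (\<Sum>i\<in>{1..z}. f i) + (\<Sum>i\<in>{Suc z..k}. f i)"
proof -
  have "{1..k} = {1..z} \<union> {Suc z..k}" using assms by auto
  then show ?thesis by (simp add: sum.union_disjoint)
qed


lemma ff_one:
  assumes hp: "\<forall>j\<in>{1..n}. p j \<le> d j" and fe: "feasible n p d tau"
    and c: "\<forall>i\<in>{1..n}. tau i = c"
  shows "\<forall>i\<in>{1..n}. asg p d i = 1"
proof -
  have "k \<le> n \<Longrightarrow> \<forall>i\<in>{1..k}. asg p d i = 1" for k
  proof (induction k)
    case 0 then show ?case by simp
  next
    case (Suc k)
    then have IH: "\<forall>i\<in>{1..k}. asg p d i = 1" by simp
    have "ld p d k 1 = (\<Sum>i\<in>{1..k}. p i)"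
      unfolding ld_eq using IH by (intro sum.cong) simp_all
    moreover have "completion p tau (Suc k) = (\<Sum>i\<in>{1..Suc k}. p i)"
    proof -
      have "tau i = tau (Suc k)" if "i \<in> {1..Suc k}" for i
        using c Suc.prems that by (metis atLeastAtMost_iff le_trans)
      then have "{i\<in>{1..Suc k}. tau i = tau (Suc k)} = {1..Suc k}" by blast
      then show ?thesis by (simp add: completion_def)
    qed
    moreover have "completion p tau (Suc k) \<le> d (Suc k)"
      using fe Suc.prems by (simp add: feasible_def)
    ultimately have h1: "ld p d k 1 + p (Suc k) \<le> d (Suc k)" by simp
    have "asg p d (Suc k) = 1"
      unfolding asg_Suc by (rule Least_equality) (use h1 in simp_all)
    show ?case
    proof
      fix i assume "i \<in> {1..Suc k}"
      then have "i = Suc k \<or> i \<in> {1..k}" by auto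
      then show "asg p d i = 1" using IH \<open>asg p d (Suc k) = 1\<close> by blast
    qed
  qed
  then show ?thesis by blast
qed

lemma ff_three:
  assumes hp: "\<forall>j\<in>{1..n}. p j \<le> d j" and fe: "feasible n p d tau"
    and c2: "card (tau ` {1..n}) = 2"
  shows "\<forall>i\<in>{1..n}. asg p d i \<le> 3"
proof (rule ccontr)
  assume "\<not> ?thesis"
  then have ex: "\<exists>j. j \<in> {1..n} \<and> 3 < asg p d j" by (auto simp: not_le)
  define j where "j = (LEAST j. j \<in> {1..n} \<and> 3 < asg p d j)"
  have jP: "j \<in> {1..n} \<and> 3 < asg p d j" unfolding j_def using ex by (rule LeastI_ex)
  have jmin: "asg p d i \<le> 3" if "i \<in> {1..n}" "i < j" for i
    using not_less_Least[of i "\<lambda>j. j \<in> {1..n} \<and> 3 < asg p d j"] that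
    unfolding j_def by fastforce
  define k where "k = j - 1"
  have jk: "j = Suc k" using jP k_def by simp
  have kn: "k < n" using jP jk by simp
  have range: "1 \<le> asg p d i \<and> asg p d i \<le> 3" if "i \<in> {1..k}" for i
    using asg_ge1[of i p d] hp jmin[of i] that kn jk by auto
  have range3: "asg p d i = 1 \<or> asg p d i = 2 \<or> asg p d i = 3" if "i \<in> {1..k}" for i
    using range[OF that] by linarith
  define L where "L m = ld p d k m" for m
  have over: "d j < L m + p j" if "1 \<le> m" "m \<le> 3" for m
    using asg_spec(3)[of p k d m] hp jP jk that unfolding L_def by auto
  define u where "u = tau j"
  define a where "a = (\<Sum>i\<in>{1..k}. if tau i = u then p i else 0)"
  define b where "b = (\<Sum>i\<in>{1..k}. if tau i \<noteq> u then p i else 0)"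
  have compj: "a + p j \<le> d j"
  proof -
    have "completion p tau j \<le> d j" using fe jP by (simp add: feasible_def)
    moreover have "completion p tau j = (\<Sum>i\<in>{1..j}. if tau i = tau j then p i else 0)"
      unfolding completion_def by (rule sum.inter_filter) simp
    moreover have "(\<Sum>i\<in>{1..j}. if tau i = tau j then p i else 0)
        = (\<Sum>i\<in>{1..k}. if tau i = tau j then p i else 0) + (\<Sum>i\<in>{Suc k..Suc k}. if tau i = tau j then p i else 0)"
      unfolding jk by (rule split_ivl) simp
    ultimately show ?thesis unfolding a_def u_def jk by simp
  qed
  have tot1: "L 1 + L 2 + L 3 = (\<Sum>i\<in>{1..k}. p i)"
  proof -
    have "(\<Sum>i\<in>{1..k}. p i) = (\<Sum>i\<in>{1..k}. (if asg p d i = 1 then p i else 0)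
          + (if asg p d i = 2 then p i else 0) + (if asg p d i = 3 then p i else 0))"
      by (rule sum.cong) (use range3 in auto)
    then show ?thesis unfolding L_def ld_eq by (simp add: sum.distrib)
  qed
  have tot2: "a + b = (\<Sum>i\<in>{1..k}. p i)"
    unfolding a_def b_def sum.distrib[symmetric] by (rule sum.cong) auto
  have La: "a < L m" if "1 \<le> m" "m \<le> 3" for m using over[OF that] compj by simp
  define Z where "Z = {i\<in>{1..k}. asg p d i \<in> {2,3} \<and> tau i \<noteq> u}"
  have finZ: "finite Z" unfolding Z_def by simp
  have Zne: "Z \<noteq> {}"
  proof
    assume Z0: "Z = {}"
    have "L 2 + L 3 \<le> a"
    proof -
      have "L 2 + L 3 = (\<Sum>i\<in>{1..k}. (if asg p d i = 2 then p i else 0) + (if asg p d i = 3 then p i else 0))"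
        unfolding L_def ld_eq by (simp add: sum.distrib)
      also have "\<dots> \<le> a" unfolding a_def
        by (rule sum_mono) (use Z0 in \<open>auto simp: Z_def\<close>)
      finally show ?thesis .
    qed
    then show False using La[of 2] by simp
  qed
  define z where "z = Max Z"
  have zZ: "z \<in> Z" unfolding z_def using finZ Zne by (rule Max_in)
  have zmax: "i \<le> z" if "i \<in> Z" for i unfolding z_def using finZ that by (rule Max_ge)
  have z1: "z \<in> {1..k}" and z23: "asg p d z \<in> {2,3}" and zu: "tau z \<noteq> u"
    using zZ unfolding Z_def by auto
  have twov: "tau i = tau z" if "i \<in> {1..n}" "tau i \<noteq> u" for i
  proof -
    define I where "I = tau ` {1..n}"
    have sub: "{u, tau z} \<subseteq> I" unfolding I_def u_def using jP z1 kn by auto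
    have "card {u, tau z} = 2" using zu by simp
    then have "{u, tau z} = I" using sub c2 unfolding I_def by (intro card_subset_eq) auto
    moreover have "tau i \<in> I" unfolding I_def using that by auto
    ultimately show ?thesis using that by auto
  qed
  define bz where "bz = (\<Sum>i\<in>{1..z}. if tau i \<noteq> u then p i else 0)"
  have compz: "bz \<le> d z"
  proof -
    have "completion p tau z \<le> d z" using fe z1 kn by (simp add: feasible_def)
    moreover have "completion p tau z = (\<Sum>i\<in>{1..z}. if tau i = tau z then p i else 0)"
      unfolding completion_def by (rule sum.inter_filter) simp
    moreover have "(\<Sum>i\<in>{1..z}. if tau i = tau z then p i else 0) = bz"
      unfolding bz_def
    proof (rule sum.cong)
      fix i assume "i \<in> {1..z}"
      then have "i \<in> {1..n}" using z1 kn by auto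
      then show "(if tau i = tau z then p i else 0) = (if tau i \<noteq> u then p i else 0)"
        using twov[of i] zu by auto
    qed simp
    ultimately show ?thesis by simp
  qed
  define z' where "z' = z - 1"
  have zz: "z = Suc z'" using z1 z'_def by simp
  have zspec: "d z < ld p d z' 1 + p z"
    using asg_spec(3)[of p z' d 1] hp z1 kn z23 zz by auto
  define R where "R = (\<Sum>i\<in>{Suc z..k}. if tau i \<noteq> u then p i else 0)"
  have bsplit: "b = bz + R" unfolding b_def bz_def R_def using z1 by (intro split_ivl) simp
  have L1: "ld p d z' 1 + R \<le> L 1"
  proof -
    have "L 1 = (\<Sum>i\<in>{1..z}. if asg p d i = 1 then p i else 0) + (\<Sum>i\<in>{Suc z..k}. if asg p d i = 1 then p i else 0)"
      unfolding L_def ld_eq using z1 by (intro split_ivl) simp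
    moreover have "(\<Sum>i\<in>{1..z}. if asg p d i = 1 then p i else 0) = ld p d z' 1 + (\<Sum>i\<in>{Suc z'..z}. if asg p d i = 1 then p i else 0)"
      unfolding ld_eq zz by (intro split_ivl) simp
    moreover have "R \<le> (\<Sum>i\<in>{Suc z..k}. if asg p d i = 1 then p i else 0)"
      unfolding R_def
    proof (rule sum_mono)
      fix i assume i: "i \<in> {Suc z..k}"
      then have "i \<notin> Z" using zmax by fastforce
      moreover have "i \<in> {1..k}" using i z1 by auto
      ultimately have "tau i \<noteq> u \<longrightarrow> asg p d i = 1" using range3[of i] unfolding Z_def by auto
      then show "(if tau i \<noteq> u then p i else 0) \<le> (if asg p d i = 1 then p i else 0)" by auto
    qed
    ultimately show ?thesis by linarith
  qed
  have pz: "p z \<le> L (asg p d z)"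
  proof -
    have "(if asg p d z = asg p d z then p z else 0) \<le> (\<Sum>i\<in>{1..k}. if asg p d i = asg p d z then p i else 0)"
      by (rule member_le_sum) (use z1 in auto)
    then show ?thesis unfolding L_def ld_eq by simp
  qed
  have key: "b < L 1 + L (asg p d z)" using L1 pz zspec compz bsplit by linarith
  show False
  proof (cases "asg p d z = 2")
    case True
    then show ?thesis using key tot1 tot2 La[of 3] by simp
  next
    case False
    then have "asg p d z = 3" using z23 by auto
    then show ?thesis using key tot1 tot2 La[of 2] by simp
  qed
qed


theorem mainTheorem8:
  fixes n :: nat and p d :: "nat \<Rightarrow> nat"
  assumes "\<forall>j\<in>{1..n}. 0 < p j \<and> p j \<le> d j"
  shows "(OPT n p d = 1 \<longrightarrow> FF n p d = 1)
       \<and> (OPT n p d = 2 \<longrightarrow> FF n p d \<le> 3)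
       \<and> (OPT n p d \<le> 2 \<longrightarrow> 2 * FF n p d \<le> 3 * OPT n p d)"
proof -
  have hp: "\<forall>j\<in>{1..n}. p j \<le> d j" using assms by auto
  obtain tau where fe: "feasible n p d tau" and ct: "card (tau ` {1..n}) = OPT n p d"
    using opt_exists[OF hp] by blast
  have c1: "FF n p d = 1" if o1: "OPT n p d = 1"
  proof -
    obtain c where cc: "tau ` {1..n} = {c}" using ct o1 by (metis card_1_singletonE)
    then have "\<forall>i\<in>{1..n}. tau i = c" by auto
    then have A: "\<forall>i\<in>{1..n}. asg p d i = 1" using ff_one[OF hp fe] by blast
    have "{1..n} \<noteq> {}" using cc by auto
    then have "asg p d ` {1..n} = {1}" using A by auto
    then show ?thesis by (simp add: FF_eq)
  qed
  have c2: "FF n p d \<le> 3" if o2: "OPT n p d = 2"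
  proof -
    have A: "\<forall>i\<in>{1..n}. asg p d i \<le> 3" using ff_three[OF hp fe] ct o2 by simp
    have "asg p d ` {1..n} \<subseteq> {1..3}"
      using A asg_ge1[of _ p d] hp by auto
    then have "card (asg p d ` {1..n}) \<le> card {1..3::nat}" by (intro card_mono) auto
    then show ?thesis by (simp add: FF_eq)
  qed
  have c0: "FF n p d = 0" if o0: "OPT n p d = 0"
  proof -
    have "tau ` {1..n} = {}" using ct o0 by simp
    then have "{1..n} = {}" by simp
    then show ?thesis by (simp add: FF_eq)
  qed
  have c3: "2 * FF n p d \<le> 3 * OPT n p d" if "OPT n p d \<le> 2"
  proof -
    have "OPT n p d = 0 \<or> OPT n p d = 1 \<or> OPT n p d = 2" using that by linarith
    then show ?thesis using c0 c1 c2 by auto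
  qed
  show ?thesis using c1 c2 c3 by blast
qed

end
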